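(* Let $L\ge1$, $d\ge1$, $c\in(0,1]$, and let $\sigma(t)=\max(t,0)$ (ReLU). Consider the bias-free network $h^{(0)}(x)=x\in\mathbb{R}^d$, $z^{(l)}_i(x)=\frac{1}{\sqrt{n_{l-1}}}\sum_jW^{(l)}_{ij}h^{(l-1)}_j(x)$, $h^{(l)}_i=\sigma(z^{(l)}_i)$ ($l=1,\dots,L$, $n_0=d$), scalar output $f(x)=\frac{1}{\sqrt{n_L}}\sum_jW^{(L+1)}_{1j}h^{(L)}_j(x)$, with independent weights $W^{(l)}_{ij}\sim\mathcal{N}(0,\mathcal{W}^{(l)}(i/n_l,j/n_{l-1}))$ where every graphon is constant, $\mathcal{W}^{(l)}(u,v)=c$ for all $l$ and all $(u,v)\in[0,1]^2$. Then the infinite-width limiting neural tangent kernel $\Theta$ of this network satisfies $$\Theta(x,x')=c^{L}\,\Theta_{\mathrm{std}}(x,x'),$$ where $\Theta_{\mathrm{std}}$ is the infinite-width limiting neural tangent kernel of the same fully connected architecture with all weights i.i.d. $\mathcal{N}(0,1)$ (i.e. constant graphons equal to $1$).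
   Context: The neural tangent kernel is $\Theta(x,x')=\nabla_\theta f(x)^\top\nabla_\theta f(x')$, the gradient taken with respect to all weights, and its infinite-width limit is taken as $n_1,\dots,n_L\to\infty$. A constant graphon models the infinite-width limit of masks produced by random pruning keeping each weight independently with probability $c$. *)

theory Defs
  imports "HOL-Probability.Probability"
begin

text \<open>Weights are indexed by triples (l, i, j): layer l in 1..L+1, row i in 1..n_l,
  column j in 1..n_(l-1). Neurons are indexed from 1.\<close>

definition relu :: "real \<Rightarrow> real" where
  "relu t = max t 0"

text \<open>Derivative of ReLU used in backpropagation (convention sigma'(0) = 0; the
  non-differentiability set has measure zero).\<close>
definition relu_deriv :: "real \<Rightarrow> real" where
  "relu_deriv t = (if t > 0 then 1 else 0)"

definition net_width :: "nat \<Rightarrow> nat \<Rightarrow> (nat \<Rightarrow> nat) \<Rightarrow> nat \<Rightarrow> nat" where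
  "net_width d L ns l = (if l = 0 then d else if l \<le> L then ns l else 1)"

fun hid :: "(nat \<times> nat \<times> nat \<Rightarrow> real) \<Rightarrow> (nat \<Rightarrow> nat) \<Rightarrow> nat \<Rightarrow> (nat \<Rightarrow> real) \<Rightarrow> nat \<Rightarrow> real" where
  "hid W n 0 x = x"
| "hid W n (Suc l) x = (\<lambda>i. relu ((1 / sqrt (real (n l))) *
      (\<Sum>j=1..n l. W (Suc l, i, j) * hid W n l x j)))"

definition preact :: "(nat \<times> nat \<times> nat \<Rightarrow> real) \<Rightarrow> (nat \<Rightarrow> nat) \<Rightarrow> nat \<Rightarrow> (nat \<Rightarrow> real) \<Rightarrow> nat \<Rightarrow> real" where
  "preact W n l x i = (1 / sqrt (real (n (l - 1)))) *
      (\<Sum>j=1..n (l - 1). W (l, i, j) * hid W n (l - 1) x j)"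

definition net_out :: "(nat \<times> nat \<times> nat \<Rightarrow> real) \<Rightarrow> (nat \<Rightarrow> nat) \<Rightarrow> nat \<Rightarrow> (nat \<Rightarrow> real) \<Rightarrow> real" where
  "net_out W n L x = preact W n (L + 1) x 1"

text \<open>Backpropagated errors: bp W n L k x i = df/dz^(L+1-k)_i (x).\<close>
fun bp :: "(nat \<times> nat \<times> nat \<Rightarrow> real) \<Rightarrow> (nat \<Rightarrow> nat) \<Rightarrow> nat \<Rightarrow> nat \<Rightarrow> (nat \<Rightarrow> real) \<Rightarrow> nat \<Rightarrow> real" where
  "bp W n L 0 x = (\<lambda>i. 1)"
| "bp W n L (Suc k) x = (\<lambda>i. relu_deriv (preact W n (L - k) x i) *
      (\<Sum>m=1..n (L + 1 - k). bp W n L k x m * W (L + 1 - k, m, i) / sqrt (real (n (L - k)))))"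

definition grad_w :: "(nat \<times> nat \<times> nat \<Rightarrow> real) \<Rightarrow> (nat \<Rightarrow> nat) \<Rightarrow> nat \<Rightarrow> (nat \<Rightarrow> real) \<Rightarrow> nat \<times> nat \<times> nat \<Rightarrow> real" where
  "grad_w W n L x = (\<lambda>(l, i, j). bp W n L (L + 1 - l) x i * hid W n (l - 1) x j / sqrt (real (n (l - 1))))"

definition weight_index :: "(nat \<Rightarrow> nat) \<Rightarrow> nat \<Rightarrow> (nat \<times> nat \<times> nat) set" where
  "weight_index n L = {(l, i, j). 1 \<le> l \<and> l \<le> L + 1 \<and> 1 \<le> i \<and> i \<le> n l \<and> 1 \<le> j \<and> j \<le> n (l - 1)}"

definition ntk_fin :: "(nat \<times> nat \<times> nat \<Rightarrow> real) \<Rightarrow> (nat \<Rightarrow> nat) \<Rightarrow> nat \<Rightarrow> (nat \<Rightarrow> real) \<Rightarrow> (nat \<Rightarrow> real) \<Rightarrow> real" where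
  "ntk_fin W n L x x' = (\<Sum>p\<in>weight_index n L. grad_w W n L x p * grad_w W n L x' p)"

definition gauss :: "real \<Rightarrow> real measure" where
  "gauss v = (if v = 0 then return lborel 0 else density lborel (normal_density 0 (sqrt v)))"

definition weight_measure :: "(nat \<Rightarrow> real \<Rightarrow> real \<Rightarrow> real) \<Rightarrow> (nat \<Rightarrow> nat) \<Rightarrow> nat \<Rightarrow> (nat \<times> nat \<times> nat \<Rightarrow> real) measure" where
  "weight_measure G n L = PiM (weight_index n L)
      (\<lambda>(l, i, j). gauss (G l (real i / real (n l)) (real j / real (n (l - 1)))))"

definition width_filter :: "nat \<Rightarrow> (nat \<Rightarrow> nat) filter" where
  "width_filter L = (INF N. principal {ns. \<forall>l\<in>{1..L}. N \<le> ns l})"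

definition is_limiting_ntk :: "(nat \<Rightarrow> real \<Rightarrow> real \<Rightarrow> real) \<Rightarrow> nat \<Rightarrow> nat \<Rightarrow> ((nat \<Rightarrow> real) \<Rightarrow> (nat \<Rightarrow> real) \<Rightarrow> real) \<Rightarrow> bool" where
  "is_limiting_ntk G d L K \<longleftrightarrow>
     (\<forall>x x' \<epsilon>. \<epsilon> > 0 \<longrightarrow>
        ((\<lambda>ns. measure (weight_measure G (net_width d L ns) L)
            {W \<in> space (weight_measure G (net_width d L ns) L).
               \<bar>ntk_fin W (net_width d L ns) L x x' - K x x'\<bar> > \<epsilon>}) \<longlongrightarrow> 0) (width_filter L))"

end

theory Submission
  imports Defs
begin
lemma gauss_scale:
  assumes "0 < c"
  shows "distr (gauss 1) (gauss c) (\<lambda>x. sqrt c * x) = gauss c"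
proof -
  have g1: "gauss 1 = density lborel (normal_density 0 1)" by (simp add: gauss_def)
  interpret prob_space "gauss 1" unfolding g1 by (rule prob_space_normal_density) simp
  have "distributed (gauss 1) lborel (\<lambda>x. x) (normal_density 0 1)"
    unfolding distributed_def g1 by (auto simp: distr_id2 normal_density_nonneg)
  from normal_density_affine[OF this, of "sqrt c" 0] assms
  have "distributed (gauss 1) lborel (\<lambda>x. 0 + sqrt c * x) (normal_density 0 (sqrt c))" by simp
  then have "distr (gauss 1) lborel (\<lambda>x. sqrt c * x) = gauss c"
    using assms by (simp add: distributed_def gauss_def)
  moreover have "distr (gauss 1) (gauss c) (\<lambda>x. sqrt c * x) = distr (gauss 1) lborel (\<lambda>x. sqrt c * x)"
    using assms by (intro distr_cong) (auto simp: gauss_def)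
  ultimately show ?thesis by simp
qed

lemma hid_cong:
  assumes "\<forall>p\<in>weight_index n L. W p = W' p"
  shows "l \<le> L \<Longrightarrow> 1 \<le> j \<Longrightarrow> j \<le> n l \<Longrightarrow> hid W n l x j = hid W' n l x j"
proof (induction l arbitrary: j)
  case 0 then show ?case by simp
next
  case (Suc l)
  have "(\<Sum>k=1..n l. W (Suc l, j, k) * hid W n l x k) = (\<Sum>k=1..n l. W' (Suc l, j, k) * hid W' n l x k)"
  proof (rule sum.cong)
    fix k assume k: "k \<in> {1..n l}"
    have "(Suc l, j, k) \<in> weight_index n L" using Suc.prems k by (auto simp: weight_index_def)
    then show "W (Suc l, j, k) * hid W n l x k = W' (Suc l, j, k) * hid W' n l x k"
      using assms Suc.IH[of k] Suc.prems k by auto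
  qed simp
  then show ?case by simp
qed

lemma preact_cong:
  assumes "\<forall>p\<in>weight_index n L. W p = W' p" "1 \<le> l" "l \<le> L + 1" "1 \<le> i" "i \<le> n l"
  shows "preact W n l x i = preact W' n l x i"
proof -
  have "(\<Sum>k=1..n (l - 1). W (l, i, k) * hid W n (l - 1) x k) = (\<Sum>k=1..n (l - 1). W' (l, i, k) * hid W' n (l - 1) x k)"
  proof (rule sum.cong)
    fix k assume k: "k \<in> {1..n (l - 1)}"
    have "(l, i, k) \<in> weight_index n L" using assms k by (auto simp: weight_index_def)
    then show "W (l, i, k) * hid W n (l - 1) x k = W' (l, i, k) * hid W' n (l - 1) x k"
      using assms hid_cong[OF assms(1), of "l - 1" k] k by auto
  qed simp
  then show ?thesis unfolding preact_def by simp
qed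

lemma bp_cong:
  assumes "\<forall>p\<in>weight_index n L. W p = W' p"
  shows "k \<le> L \<Longrightarrow> 1 \<le> i \<Longrightarrow> i \<le> n (L + 1 - k) \<Longrightarrow> bp W n L k x i = bp W' n L k x i"
proof (induction k arbitrary: i)
  case 0 then show ?case by simp
next
  case (Suc k)
  have p: "preact W n (L - k) x i = preact W' n (L - k) x i"
    using Suc.prems by (intro preact_cong[OF assms]) auto
  have "(\<Sum>m=1..n (L + 1 - k). bp W n L k x m * W (L + 1 - k, m, i) / sqrt (real (n (L - k))))
      = (\<Sum>m=1..n (L + 1 - k). bp W' n L k x m * W' (L + 1 - k, m, i) / sqrt (real (n (L - k))))"
  proof (rule sum.cong)
    fix m assume m: "m \<in> {1..n (L + 1 - k)}"
    have "(L + 1 - k, m, i) \<in> weight_index n L" using Suc.prems m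
      by (auto simp: weight_index_def Suc_diff_le)
    then show "bp W n L k x m * W (L + 1 - k, m, i) / sqrt (real (n (L - k))) =
        bp W' n L k x m * W' (L + 1 - k, m, i) / sqrt (real (n (L - k)))"
      using assms Suc.IH[of m] Suc.prems m by auto
  qed simp
  then show ?case using p by simp
qed

lemma ntk_cong:
  assumes "\<forall>p\<in>weight_index n L. W p = W' p"
  shows "ntk_fin W n L x x' = ntk_fin W' n L x x'"
  unfolding ntk_fin_def
proof (rule sum.cong)
  fix p assume p: "p \<in> weight_index n L"
  obtain l i j where pe: "p = (l, i, j)" by (cases p)
  have g: "grad_w W n L y p = grad_w W' n L y p" for y
  proof -
    have "bp W n L (L + 1 - l) y i = bp W' n L (L + 1 - l) y i"
      using p pe by (intro bp_cong[OF assms]) (auto simp: weight_index_def)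
    moreover have "hid W n (l - 1) y j = hid W' n (l - 1) y j"
      using p pe by (intro hid_cong[OF assms]) (auto simp: weight_index_def)
    ultimately show ?thesis by (simp add: grad_w_def pe)
  qed
  show "grad_w W n L x p * grad_w W n L x' p = grad_w W' n L x p * grad_w W' n L x' p"
    using g by simp
qed simp

lemma relu_scale: "0 < a \<Longrightarrow> relu (a * t) = a * relu t"
  by (auto simp: relu_def max_def mult_le_0_iff zero_le_mult_iff)

lemma relu_deriv_scale: "0 < a \<Longrightarrow> relu_deriv (a * t) = relu_deriv t"
  by (auto simp: relu_deriv_def zero_less_mult_iff)

lemma hid_scale:
  assumes "0 < s"
  shows "hid (\<lambda>p. s * W p) n l x j = s ^ l * hid W n l x j"
proof (induction l arbitrary: j)
  case 0 then show ?case by simp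
next
  case (Suc l)
  have "(\<Sum>k=1..n l. (s * W (Suc l, j, k)) * hid (\<lambda>p. s * W p) n l x k)
     = (\<Sum>k=1..n l. s ^ Suc l * (W (Suc l, j, k) * hid W n l x k))"
    by (rule sum.cong) (simp_all add: Suc.IH)
  then have e: "(1 / sqrt (real (n l))) * (\<Sum>k=1..n l. (s * W (Suc l, j, k)) * hid (\<lambda>p. s * W p) n l x k)
     = s ^ Suc l * ((1 / sqrt (real (n l))) * (\<Sum>k=1..n l. W (Suc l, j, k) * hid W n l x k))"
    by (simp only: sum_distrib_left[symmetric] mult.left_commute)
  have pos: "0 < s ^ Suc l" using assms by simp
  show ?case by (simp only: hid.simps e relu_scale[OF pos])
qed

lemma preact_scale:
  assumes "0 < s"
  shows "preact (\<lambda>p. s * W p) n l x i = s ^ (l - 1 + 1) * preact W n l x i"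
proof -
  have e: "(\<Sum>k=1..n (l - 1). (s * W (l, i, k)) * hid (\<lambda>p. s * W p) n (l - 1) x k)
     = s ^ (l - 1 + 1) * (\<Sum>k=1..n (l - 1). W (l, i, k) * hid W n (l - 1) x k)"
    unfolding sum_distrib_left by (rule sum.cong) (simp_all add: hid_scale[OF assms])
  show ?thesis unfolding preact_def e by (simp only: mult_ac)
qed

lemma bp_scale:
  assumes "0 < s"
  shows "bp (\<lambda>p. s * W p) n L k x i = s ^ k * bp W n L k x i"
proof (induction k arbitrary: i)
  case 0 then show ?case by simp
next
  case (Suc k)
  have pos: "0 < s ^ (L - k - 1 + 1)" using assms by simp
  have r: "relu_deriv (preact (\<lambda>p. s * W p) n (L - k) x i) = relu_deriv (preact W n (L - k) x i)"
    by (simp only: preact_scale[OF assms] relu_deriv_scale[OF pos])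
  have "(\<Sum>m=1..n (L + 1 - k). bp (\<lambda>p. s * W p) n L k x m * (s * W (L + 1 - k, m, i)) / sqrt (real (n (L - k))))
     = (\<Sum>m=1..n (L + 1 - k). s ^ Suc k * (bp W n L k x m * W (L + 1 - k, m, i) / sqrt (real (n (L - k)))))"
    by (rule sum.cong) (simp_all add: Suc.IH)
  then have e: "(\<Sum>m=1..n (L + 1 - k). bp (\<lambda>p. s * W p) n L k x m * (s * W (L + 1 - k, m, i)) / sqrt (real (n (L - k))))
     = s ^ Suc k * (\<Sum>m=1..n (L + 1 - k). (bp W n L k x m * W (L + 1 - k, m, i) / sqrt (real (n (L - k)))))"
    by (simp only: sum_distrib_left[symmetric])
  show ?case unfolding bp.simps r e by (simp only: mult_ac)
qed

lemma ntk_scale: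
  assumes "0 < s"
  shows "ntk_fin (\<lambda>p. s * W p) n L x x' = (s ^ 2) ^ L * ntk_fin W n L x x'"
  unfolding ntk_fin_def sum_distrib_left
proof (rule sum.cong)
  fix p assume p: "p \<in> weight_index n L"
  obtain l i j where pe: "p = (l, i, j)" by (cases p)
  have e: "L + 1 - l + (l - 1) = L" using p pe by (auto simp: weight_index_def)
  have g: "grad_w (\<lambda>p. s * W p) n L y p = s ^ L * grad_w W n L y p" for y
  proof -
    have "grad_w (\<lambda>p. s * W p) n L y p = (s ^ (L + 1 - l) * s ^ (l - 1)) * grad_w W n L y p"
      by (simp add: grad_w_def pe bp_scale[OF assms] hid_scale[OF assms])
    also have "s ^ (L + 1 - l) * s ^ (l - 1) = s ^ L" by (simp only: power_add[symmetric] e)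
    finally show ?thesis .
  qed
  have "(s ^ 2) ^ L = s ^ L * s ^ L" by (simp add: power_mult[symmetric] power2_eq_square power_mult_distrib)
  then show "grad_w (\<lambda>p. s * W p) n L x p * grad_w (\<lambda>p. s * W p) n L x' p =
      (s ^ 2) ^ L * (grad_w W n L x p * grad_w W n L x' p)"
    by (simp only: g mult_ac)
qed simp
lemma sets_gauss: "sets (gauss v) = sets borel"
  by (simp add: gauss_def)

lemma space_gauss: "space (gauss v) = UNIV"
  by (simp add: gauss_def)

lemma meas_gauss: "h \<in> borel_measurable borel \<Longrightarrow> h \<in> measurable (gauss a) (gauss b)"
  by (simp add: measurable_cong_sets[OF sets_gauss sets_gauss])

lemma meas_compose:
  assumes "h \<in> borel_measurable borel"
  shows "compose I h \<in> measurable (PiM I (\<lambda>_. gauss a)) (PiM I (\<lambda>_. gauss b))"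
  unfolding compose_def
proof (rule measurable_restrict)
  fix i assume i: "i \<in> I"
  show "(\<lambda>W. h (W i)) \<in> measurable (PiM I (\<lambda>_. gauss a)) (gauss b)"
    by (rule measurable_compose[OF measurable_component_singleton[OF i] meas_gauss[OF assms]])
qed

lemma prob_gauss: "0 < v \<Longrightarrow> prob_space (gauss v)"
  by (simp add: gauss_def prob_space_normal_density)

lemma finite_wi: "finite (weight_index n L)"
proof (rule finite_subset)
  show "weight_index n L \<subseteq> (SIGMA l:{1..L+1}. {1..n l} \<times> {1..n (l - 1)})"
    by (auto simp: weight_index_def)
qed auto

lemma wm_const:
  assumes "\<forall>l u v. u \<in> {0..1} \<and> v \<in> {0..1} \<longrightarrow> G l u v = c"
  shows "weight_measure G n L = PiM (weight_index n L) (\<lambda>_. gauss c)"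
  unfolding weight_measure_def
proof (rule PiM_cong)
  fix p assume p: "p \<in> weight_index n L"
  obtain l i j where pe: "p = (l, i, j)" by (cases p)
  have "real i / real (n l) \<in> {0..1}" "real j / real (n (l - 1)) \<in> {0..1}"
    using p pe by (auto simp: weight_index_def)
  then show "(case p of (l, i, j) \<Rightarrow> gauss (G l (real i / real (n l)) (real j / real (n (l - 1))))) = gauss c"
    using assms pe by simp
qed simp

lemma measure_transfer:
  fixes c :: real and K0 :: real
  assumes G: "\<forall>l u v. u \<in> {0..1} \<and> v \<in> {0..1} \<longrightarrow> G l u v = c" and c: "0 < c"
  shows "measure (weight_measure G n L) {W \<in> space (weight_measure G n L). \<bar>ntk_fin W n L x x' - c ^ L * K0\<bar> > \<epsilon>}
       = measure (weight_measure (\<lambda>_ _ _. 1) n L) {W \<in> space (weight_measure (\<lambda>_ _ _. 1) n L). \<bar>ntk_fin W n L x x' - K0\<bar> > \<epsilon> / c ^ L}"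
proof -
  define I where "I = weight_index n L"
  define s where "s = sqrt c"
  have s: "0 < s" "s ^ 2 = c" using c by (auto simp: s_def)
  define Mc where "Mc = PiM I (\<lambda>_. gauss c)"
  define M1 where "M1 = PiM I (\<lambda>_. gauss (1::real))"
  have eMc: "weight_measure G n L = Mc" unfolding Mc_def I_def by (rule wm_const[OF G])
  have eM1: "weight_measure (\<lambda>_ _ _. 1) n L = M1" unfolding M1_def I_def by (rule wm_const) simp
  define f where "f = compose I (\<lambda>x. s * x)"
  define g where "g = compose I (\<lambda>x. x / s)"
  have fm: "f \<in> measurable M1 Mc" unfolding f_def M1_def Mc_def by (rule meas_compose) simp
  have gm: "g \<in> measurable Mc M1" unfolding g_def M1_def Mc_def by (rule meas_compose) simp
  have dist: "distr M1 Mc f = Mc"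
  proof -
    have "distr M1 Mc f = PiM I (\<lambda>_. distr (gauss 1) (gauss c) (\<lambda>x. s * x))"
      unfolding M1_def Mc_def f_def
      by (rule distr_PiM_finite_prob_space)
         (auto simp: I_def finite_wi c intro!: product_prob_spaceI prob_gauss meas_gauss)
    also have "\<dots> = Mc" unfolding Mc_def s_def using gauss_scale[OF c] by simp
    finally show ?thesis .
  qed
  define A where "A = {W \<in> space Mc. \<bar>ntk_fin W n L x x' - c ^ L * K0\<bar> > \<epsilon>}"
  define B where "B = {W \<in> space M1. \<bar>ntk_fin W n L x x' - K0\<bar> > \<epsilon> / c ^ L}"
  have cL: "0 < c ^ L" using c by simp
  have ntkf: "ntk_fin (f W) n L x x' = c ^ L * ntk_fin W n L x x'" for W
  proof -
    have "ntk_fin (f W) n L x x' = ntk_fin (\<lambda>p. s * W p) n L x x'"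
      by (rule ntk_cong) (simp add: f_def compose_def I_def)
    also have "\<dots> = c ^ L * ntk_fin W n L x x'" using ntk_scale[OF s(1)] s(2) by simp
    finally show ?thesis .
  qed
  have iff: "\<bar>c ^ L * a - c ^ L * K0\<bar> > \<epsilon> \<longleftrightarrow> \<bar>a - K0\<bar> > \<epsilon> / c ^ L" for a
  proof -
    have "\<bar>c ^ L * a - c ^ L * K0\<bar> = c ^ L * \<bar>a - K0\<bar>"
      using cL by (simp add: right_diff_distrib[symmetric] abs_mult)
    then show ?thesis using cL by (simp add: pos_divide_less_eq mult.commute)
  qed
  have BA: "B = f -` A \<inter> space M1"
    using measurable_space[OF fm] by (auto simp: A_def B_def ntkf iff)
  have fg: "f (g W) = W" if "W \<in> space Mc" for W
  proof -
    have "W \<in> extensional I" using that by (simp add: Mc_def space_PiM PiE_def)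
    then show ?thesis using s(1) by (auto simp: f_def g_def compose_def extensional_def)
  qed
  have AB: "A = g -` B \<inter> space Mc"
  proof (intro set_eqI iffI)
    fix W assume W: "W \<in> A"
    then have Ws: "W \<in> space Mc" by (simp add: A_def)
    show "W \<in> g -` B \<inter> space Mc" using W Ws fg[OF Ws] measurable_space[OF gm Ws] by (simp add: BA)
  next
    fix W assume "W \<in> g -` B \<inter> space Mc"
    then show "W \<in> A" using fg by (auto simp: BA)
  qed
  have "measure Mc A = measure M1 B"
  proof (cases "A \<in> sets Mc")
    case True
    then show ?thesis using measure_distr[OF fm True] by (simp add: dist BA)
  next
    case False
    have "B \<notin> sets M1"
    proof
      assume "B \<in> sets M1"
      then have "g -` B \<inter> space Mc \<in> sets Mc" by (rule measurable_sets[OF gm])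
      with False AB show False by simp
    qed
    then show ?thesis using False by (simp add: measure_notin_sets)
  qed
  then show ?thesis unfolding eMc eM1 A_def B_def .
qed

theorem mainTheorem2:
  fixes L d :: nat and c :: real and G :: "nat \<Rightarrow> real \<Rightarrow> real \<Rightarrow> real"
    and K :: "(nat \<Rightarrow> real) \<Rightarrow> (nat \<Rightarrow> real) \<Rightarrow> real"
  assumes "L \<ge> 1" and "d \<ge> 1" and "0 < c" and "c \<le> 1"
    and "\<forall>l u v. u \<in> {0..1} \<and> v \<in> {0..1} \<longrightarrow> G l u v = c"
  shows "is_limiting_ntk G d L (\<lambda>x x'. c ^ L * K x x') \<longleftrightarrow> is_limiting_ntk (\<lambda>_ _ _. 1) d L K"
proof -
  have cL: "0 < c ^ L" using assms(3) by simp
  note T = measure_transfer[OF assms(5) assms(3)]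
  show ?thesis
    unfolding is_limiting_ntk_def
  proof (intro iffI allI impI)
    fix x x' :: "nat \<Rightarrow> real" and \<epsilon> :: real assume e: "\<epsilon> > 0"
    assume H: "\<forall>x x' \<epsilon>. \<epsilon> > 0 \<longrightarrow> ((\<lambda>ns. measure (weight_measure G (net_width d L ns) L)
            {W \<in> space (weight_measure G (net_width d L ns) L).
               \<bar>ntk_fin W (net_width d L ns) L x x' - c ^ L * K x x'\<bar> > \<epsilon>}) \<longlongrightarrow> 0) (width_filter L)"
    have eq: "\<epsilon> * c ^ L / c ^ L = \<epsilon>" using cL by (metis less_irrefl nonzero_mult_div_cancel_right)
    from mp[OF H[THEN spec[of _ x], THEN spec[of _ x'], THEN spec[of _ "\<epsilon> * c ^ L"]] mult_pos_pos[OF e cL]]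
    show "((\<lambda>ns. measure (weight_measure (\<lambda>_ _ _. 1) (net_width d L ns) L)
            {W \<in> space (weight_measure (\<lambda>_ _ _. 1) (net_width d L ns) L).
               \<bar>ntk_fin W (net_width d L ns) L x x' - K x x'\<bar> > \<epsilon>}) \<longlongrightarrow> 0) (width_filter L)"
      unfolding T eq .
  next
    fix x x' :: "nat \<Rightarrow> real" and \<epsilon> :: real assume e: "\<epsilon> > 0"
    assume H: "\<forall>x x' \<epsilon>. \<epsilon> > 0 \<longrightarrow> ((\<lambda>ns. measure (weight_measure (\<lambda>_ _ _. 1) (net_width d L ns) L)
            {W \<in> space (weight_measure (\<lambda>_ _ _. 1) (net_width d L ns) L).
               \<bar>ntk_fin W (net_width d L ns) L x x' - K x x'\<bar> > \<epsilon>}) \<longlongrightarrow> 0) (width_filter L)"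
    from mp[OF H[THEN spec[of _ x], THEN spec[of _ x'], THEN spec[of _ "\<epsilon> / c ^ L"]] divide_pos_pos[OF e cL]]
    show "((\<lambda>ns. measure (weight_measure G (net_width d L ns) L)
            {W \<in> space (weight_measure G (net_width d L ns) L).
               \<bar>ntk_fin W (net_width d L ns) L x x' - c ^ L * K x x'\<bar> > \<epsilon>}) \<longlongrightarrow> 0) (width_filter L)"
      unfolding T .
  qed
qed
end
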